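(* For every even $n\ge0$ and every graph $G$ of order $n$, the number of faces satisfies $F(G)\le \frac{3n}{2}+1$.
   Context: Trees. A 2-rooted ternary tree of order $n$ is a finite plane tree $U$ with a root vertex of degree 2 and $n$ true vertices of degree 4; each edge is internal or a leaf (half-edge). Each true vertex $v$ has parent edge $e_1(v)$ (towards the root) and ordered children edges $e_2(v),e_3(v),e_4(v)$. One root edge has type $\alpha$, the other $\bar\alpha$; if $e_1(v)$ has type $\tau$ then $e_2(v)$ has the other type and $e_3(v),e_4(v)$ have type $\tau$. Leaves of type $\alpha$ are leaves, of type $\bar\alpha$ anti-leaves ($n+1$ each). A heap-ordering labels true vertices bijectively by $\{1,\dots,n\}$, increasing from parent to child. Graphs. For even $n$, a graph of order $n$ is $G=(U,w,w')$: $U$ heap-ordered; $w$ a bijection leaves $\to$ anti-leaves (dashed edges; internal edges are solid); $w'$ a partition of true vertices into $n/2$ pairs (wavy edges) with, for each pair $\{v,v'\}$ ($v$ of smaller label), one of eight propagators in $(S,j,k)=(S_v,j_v,k_v)$, $(S',j',k')=(S_{v'},j_{v'},k_{v'})$: $\delta_{jj'}\delta_{kk'}$, $\delta_{j,S-j'}\delta_{kk'}$, $\delta_{jj'}\delta_{k,S-k'}$, $\delta_{j,S-j'}\delta_{k,S-k'}$, $\delta_{jk'}\delta_{kj'}$, $\delta_{j,S-k'}\delta_{kj'}$, $\delta_{jk'}\delta_{k,S-j'}$, $\delta_{j,S-k'}\delta_{k,S-j'}$, together with $S=S'$. Momenta $j_v,S_v-j_v,k_v,S_v-k_v$ are attached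 to the ends at $v$ of $e_1(v),\dots,e_4(v)$. Faces. Call the edge-ends at true vertices and at the root slots. Each propagator of a wavy edge $\{v,v'\}$, with $S=S'$, identifies each of $j,S-j,k,S-k$ of $v$ with one momentum of $v'$, hence pairs each slot of $v$ with a slot of $v'$; these four pairs are the corners of that wavy edge ($2n$ corners). Let $\Gamma$ be the graph on the slots whose edges are the solid and dashed edges of $G$, the corners, and one extra edge joining the two root slots; every slot has degree 2 and the connected components (cycles) of $\Gamma$ are the faces; $F(G)$ is their number. *)

theory Defs
  imports Complex_Main
begin

text \<open>Slots (edge-ends): RS 0, RS 1 are the two slots at the root (RS 0 is the
first root edge, RS 1 the second); VS v i (1 <= i <= 4) is the end of e_i(v) at the
true vertex v.  True vertices are identified with their heap labels 1..n.\<close>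

datatype slot = RS nat | VS nat nat

definition all_slots :: "nat \<Rightarrow> slot set" where
  "all_slots n = {RS 0, RS 1} \<union> {VS v i | v i. v \<in> {1..n} \<and> i \<in> {1..4}}"

text \<open>Down slots: slots from which an edge goes away from the root (root slots and
the children slots e_2, e_3, e_4 of true vertices).\<close>
definition down_slots :: "nat \<Rightarrow> slot set" where
  "down_slots n = {RS 0, RS 1} \<union> {VS v i | v i. v \<in> {1..n} \<and> i \<in> {2,3,4}}"

text \<open>A tree is given by ch: for a down slot s, ch s = Some v if the edge at s is
internal and ends at the true vertex v (at v's slot VS v 1), and ch s = None if the
edge at s is a leaf/anti-leaf (half-edge).\<close>
definition heap_tree :: "nat \<Rightarrow> (slot \<Rightarrow> nat option) \<Rightarrow> bool" where
  "heap_tree n ch \<longleftrightarrow>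
     (\<forall>s. s \<notin> down_slots n \<longrightarrow> ch s = None) \<and>
     bij_betw ch {s \<in> down_slots n. ch s \<noteq> None} (Some ` {1..n}) \<and>
     (\<forall>u i v. ch (VS u i) = Some v \<longrightarrow> u < v)"

text \<open>Edge types: etype rt ch s b means the edge at down slot s has type b, where
True stands for alpha and False for alpha-bar.  rt is the type of the root edge at
RS 0; the root edge at RS 1 has the other type.\<close>
inductive etype :: "bool \<Rightarrow> (slot \<Rightarrow> nat option) \<Rightarrow> slot \<Rightarrow> bool \<Rightarrow> bool"
  for rt :: bool and ch :: "slot \<Rightarrow> nat option" where
  root0: "etype rt ch (RS 0) rt"
| root1: "etype rt ch (RS 1) (\<not> rt)"
| child2: "ch s = Some u \<Longrightarrow> etype rt ch s b \<Longrightarrow> etype rt ch (VS u 2) (\<not> b)"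
| child34: "ch s = Some u \<Longrightarrow> etype rt ch s b \<Longrightarrow> i \<in> {3, 4} \<Longrightarrow> etype rt ch (VS u i) b"

definition leaves :: "nat \<Rightarrow> bool \<Rightarrow> (slot \<Rightarrow> nat option) \<Rightarrow> slot set" where
  "leaves n rt ch = {s \<in> down_slots n. ch s = None \<and> etype rt ch s True}"

definition antileaves :: "nat \<Rightarrow> bool \<Rightarrow> (slot \<Rightarrow> nat option) \<Rightarrow> slot set" where
  "antileaves n rt ch = {s \<in> down_slots n. ch s = None \<and> etype rt ch s False}"

text \<open>Momenta at the slots of a vertex: slot 1 carries j, slot 2 carries S-j,
slot 3 carries k, slot 4 carries S-k.  A momentum is encoded as (flip, var) with
var = False for j, True for k, and flip = True for "S - .".\<close>
definition mom :: "nat \<Rightarrow> bool \<times> bool" where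
  "mom i = (if i = 1 then (False, False) else if i = 2 then (True, False)
            else if i = 3 then (False, True) else (True, True))"

definition slot_of_mom :: "bool \<times> bool \<Rightarrow> nat" where
  "slot_of_mom m = (if snd m then 3 else 1) + (if fst m then 1 else 0)"

text \<open>A propagator (sw, fj, fk) means: j = (S - if fj) (if sw then k' else j') and
k = (S - if fk) (if sw then j' else k'), together with S = S'.  The 8 triples are
exactly the 8 propagators of the paper:
(F,F,F) d_{jj'}d_{kk'}, (F,T,F) d_{j,S-j'}d_{kk'}, (F,F,T) d_{jj'}d_{k,S-k'},
(F,T,T) d_{j,S-j'}d_{k,S-k'}, (T,F,F) d_{jk'}d_{kj'}, (T,T,F) d_{j,S-k'}d_{kj'},
(T,F,T) d_{jk'}d_{k,S-j'}, (T,T,T) d_{j,S-k'}d_{k,S-j'}.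
corner_slot pr i is the slot of v' identified with slot i of v.\<close>
definition corner_slot :: "bool \<times> bool \<times> bool \<Rightarrow> nat \<Rightarrow> nat" where
  "corner_slot pr i =
     (let (sw, fj, fk) = pr; (fl, x) = mom i;
          f = (if x then fk else fj)
      in slot_of_mom (fl \<noteq> f, x \<noteq> sw))"

text \<open>A graph of order n: heap-ordered tree (n, rt, ch); w a bijection from leaves to
anti-leaves (dashed edges); p a fixed-point-free involution on {1..n} (wavy edges:
the pairs {v, p v}); pr v is the propagator of the wavy edge {v, p v} when v < p v.\<close>
definition is_graph :: "nat \<Rightarrow> bool \<Rightarrow> (slot \<Rightarrow> nat option) \<Rightarrow> (slot \<Rightarrow> slot)
    \<Rightarrow> (nat \<Rightarrow> nat) \<Rightarrow> (nat \<Rightarrow> bool \<times> bool \<times> bool) \<Rightarrow> bool" where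
  "is_graph n rt ch w p pr \<longleftrightarrow>
     heap_tree n ch \<and>
     bij_betw w (leaves n rt ch) (antileaves n rt ch) \<and>
     (\<forall>v \<in> {1..n}. p v \<in> {1..n} \<and> p v \<noteq> v \<and> p (p v) = v)"

definition gamma_edges :: "nat \<Rightarrow> bool \<Rightarrow> (slot \<Rightarrow> nat option) \<Rightarrow> (slot \<Rightarrow> slot)
    \<Rightarrow> (nat \<Rightarrow> nat) \<Rightarrow> (nat \<Rightarrow> bool \<times> bool \<times> bool) \<Rightarrow> (slot \<times> slot) set" where
  "gamma_edges n rt ch w p pr =
     {(s, VS v 1) | s v. s \<in> down_slots n \<and> ch s = Some v}
     \<union> {(l, w l) | l. l \<in> leaves n rt ch}
     \<union> {(VS v i, VS (p v) (corner_slot (pr v) i)) | v i. v \<in> {1..n} \<and> v < p v \<and> i \<in> {1..4}}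
     \<union> {(RS 0, RS 1)}"

definition faces :: "nat \<Rightarrow> bool \<Rightarrow> (slot \<Rightarrow> nat option) \<Rightarrow> (slot \<Rightarrow> slot)
    \<Rightarrow> (nat \<Rightarrow> nat) \<Rightarrow> (nat \<Rightarrow> bool \<times> bool \<times> bool) \<Rightarrow> nat" where
  "faces n rt ch w p pr =
     card (all_slots n // ((gamma_edges n rt ch w p pr \<union> (gamma_edges n rt ch w p pr)\<inverse>)\<^sup>*))"

end

theory Submission
  imports Defs
begin

definition gen :: "('a \<times> 'a) set \<Rightarrow> ('a \<times> 'a) set" where
  "gen E = (E \<union> E\<inverse>)\<^sup>*"

lemma gen_refl: "(x, x) \<in> gen E" by (simp add: gen_def)

lemma gen_sym: "(x, y) \<in> gen E \<Longrightarrow> (y, x) \<in> gen E"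
proof -
  assume "(x, y) \<in> gen E"
  hence "(y, x) \<in> ((E \<union> E\<inverse>)\<^sup>*)\<inverse>" by (simp add: gen_def)
  hence "(y, x) \<in> ((E \<union> E\<inverse>)\<inverse>)\<^sup>*" by (simp add: rtrancl_converse)
  moreover have "(E \<union> E\<inverse>)\<inverse> = E \<union> E\<inverse>" by auto
  ultimately show ?thesis by (simp add: gen_def)
qed

lemma gen_trans: "(x, y) \<in> gen E \<Longrightarrow> (y, z) \<in> gen E \<Longrightarrow> (x, z) \<in> gen E"
  unfolding gen_def by (rule rtrancl_trans)

lemma gen_edge: "(x, y) \<in> E \<Longrightarrow> (x, y) \<in> gen E"
  unfolding gen_def by auto

lemma gen_mono: "E \<subseteq> F \<Longrightarrow> gen E \<subseteq> gen F"
  unfolding gen_def by (rule rtrancl_mono) auto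

lemma gen_class_eq:
  assumes "(u, v) \<in> gen E"
  shows "gen E `` {u} = gen E `` {v}"
proof (intro set_eqI iffI)
  fix y assume "y \<in> gen E `` {u}"
  hence "(u, y) \<in> gen E" by simp
  hence "(v, y) \<in> gen E" using gen_trans[OF gen_sym[OF assms]] by simp
  thus "y \<in> gen E `` {v}" by simp
next
  fix y assume "y \<in> gen E `` {v}"
  hence "(v, y) \<in> gen E" by simp
  hence "(u, y) \<in> gen E" using gen_trans[OF assms] by simp
  thus "y \<in> gen E `` {u}" by simp
qed

lemma gen_insert_char:
  assumes "(x, y) \<in> gen (insert (a, b) E)"
  shows "(x, y) \<in> gen E \<or> ((x, a) \<in> gen E \<and> (b, y) \<in> gen E) \<or> ((x, b) \<in> gen E \<and> (a, y) \<in> gen E)"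
proof -
  have "(x, y) \<in> (insert (a, b) E \<union> (insert (a, b) E)\<inverse>)\<^sup>*" using assms by (simp add: gen_def)
  thus ?thesis
  proof (induction rule: rtrancl_induct)
    case base
    then show ?case by (simp add: gen_refl)
  next
    case (step y z)
    have yz: "(y, z) \<in> gen E \<or> (y, z) = (a, b) \<or> (y, z) = (b, a)"
      using step.hyps(2) by (auto intro: gen_edge gen_sym)
    note tr = gen_trans[of _ _ E] and sy = gen_sym[of _ _ E] and rf = gen_refl[of _ E]
    from step.IH show ?case
    proof (elim disjE conjE)
      assume h: "(x, y) \<in> gen E"
      from yz show ?case
      proof (elim disjE)
        assume "(y, z) \<in> gen E" thus ?case using tr[OF h] by blast
      next
        assume "(y, z) = (a, b)" thus ?case using h rf by simp
      next
        assume "(y, z) = (b, a)" thus ?case using h rf by simp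
      qed
    next
      assume h1: "(x, a) \<in> gen E" and h2: "(b, y) \<in> gen E"
      from yz show ?case
      proof (elim disjE)
        assume "(y, z) \<in> gen E" thus ?case using h1 tr[OF h2] by blast
      next
        assume e: "(y, z) = (a, b)"
        hence "(a, b) \<in> gen E" using sy[OF h2] by simp
        thus ?case using tr[OF h1] e by simp
      next
        assume "(y, z) = (b, a)" thus ?case using h1 by simp
      qed
    next
      assume h1: "(x, b) \<in> gen E" and h2: "(a, y) \<in> gen E"
      from yz show ?case
      proof (elim disjE)
        assume "(y, z) \<in> gen E" thus ?case using h1 tr[OF h2] by blast
      next
        assume "(y, z) = (a, b)" thus ?case using h1 by simp
      next
        assume e: "(y, z) = (b, a)"
        hence "(b, a) \<in> gen E" using sy[OF h2] by simp
        thus ?case using tr[OF h1] e by simp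
      qed
    qed
  qed
qed

lemma gen_classes_step:
  assumes "finite S"
  shows "card (S // gen E) \<le> card (S // gen (insert (a, b) E)) + 1"
proof -
  let ?R = "gen E" and ?R' = "gen (insert (a, b) E)"
  have sub: "?R \<subseteq> ?R'" by (rule gen_mono) auto
  define f where "f C = ?R' `` C" for C
  have fcl: "f (?R `` {x}) = ?R' `` {x}" for x
  proof (intro set_eqI iffI)
    fix z assume "z \<in> f (?R `` {x})"
    then obtain y where y: "(x, y) \<in> ?R" "(y, z) \<in> ?R'" unfolding f_def by auto
    have "(x, y) \<in> ?R'" using y(1) sub by blast
    thus "z \<in> ?R' `` {x}" using gen_trans[OF _ y(2)] by simp
  next
    fix z assume "z \<in> ?R' `` {x}"
    moreover have "x \<in> ?R `` {x}" by (simp add: gen_refl)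
    ultimately show "z \<in> f (?R `` {x})" unfolding f_def by auto
  qed
  have img: "f ` (S // ?R) \<subseteq> S // ?R'"
  proof
    fix D assume "D \<in> f ` (S // ?R)"
    then obtain x where "x \<in> S" "D = f (?R `` {x})" unfolding quotient_def by auto
    thus "D \<in> S // ?R'" using fcl unfolding quotient_def by auto
  qed
  have inj: "inj_on f (S // ?R - {?R `` {a}})"
  proof (rule inj_onI)
    fix C D assume C: "C \<in> S // ?R - {?R `` {a}}" and D: "D \<in> S // ?R - {?R `` {a}}" and eq: "f C = f D"
    obtain x where x: "x \<in> S" "C = ?R `` {x}" using C unfolding quotient_def by auto
    obtain y where y: "y \<in> S" "D = ?R `` {y}" using D unfolding quotient_def by auto
    have "?R' `` {x} = ?R' `` {y}" using eq x y fcl by simp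
    moreover have "y \<in> ?R' `` {y}" by (simp add: gen_refl)
    ultimately have "y \<in> ?R' `` {x}" by blast
    hence "(x, y) \<in> ?R'" by simp
    hence c: "(x, y) \<in> ?R \<or> ((x, a) \<in> ?R \<and> (b, y) \<in> ?R) \<or> ((x, b) \<in> ?R \<and> (a, y) \<in> ?R)"
      by (rule gen_insert_char)
    have nC: "?R `` {x} \<noteq> ?R `` {a}" and nD: "?R `` {y} \<noteq> ?R `` {a}" using C D x y by auto
    from c show "C = D"
    proof (elim disjE conjE)
      assume "(x, y) \<in> ?R" thus ?thesis using x y gen_class_eq by simp
    next
      assume "(x, a) \<in> ?R" hence "?R `` {x} = ?R `` {a}" by (rule gen_class_eq)
      thus ?thesis using nC by simp
    next
      assume "(a, y) \<in> ?R" hence "?R `` {a} = ?R `` {y}" by (rule gen_class_eq)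
      thus ?thesis using nD by simp
    qed
  qed
  have fq: "finite (S // Q)" for Q :: "('a \<times> 'a) set"
  proof -
    have "S // Q = (\<lambda>x. Q `` {x}) ` S" by (auto simp: quotient_def)
    thus ?thesis using assms by simp
  qed
  have fin: "finite (S // ?R')" by (rule fq)
  have finR: "finite (S // ?R)" by (rule fq)
  have "card (S // ?R) \<le> card (S // ?R - {?R `` {a}}) + 1"
  proof (cases "?R `` {a} \<in> S // ?R")
    case True
    have "card (S // ?R - {?R `` {a}}) = card (S // ?R) - 1"
      using True finR by (simp add: card_Diff_singleton)
    thus ?thesis by simp
  next
    case False
    thus ?thesis by simp
  qed
  also have "card (S // ?R - {?R `` {a}}) = card (f ` (S // ?R - {?R `` {a}}))"
    using inj by (simp add: card_image)
  also have "\<dots> \<le> card (S // ?R')"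
    by (rule card_mono[OF fin]) (use img in blast)
  finally show ?thesis by simp
qed

lemma gen_classes_many:
  assumes "finite S" "finite X"
  shows "card (S // gen E) \<le> card (S // gen (X \<union> E)) + card X"
  using assms(2)
proof (induction X rule: finite_induct)
  case empty
  then show ?case by simp
next
  case (insert x F)
  obtain a b where x: "x = (a, b)" by (cases x)
  have "card (S // gen (F \<union> E)) \<le> card (S // gen (insert (a, b) (F \<union> E))) + 1"
    by (rule gen_classes_step[OF assms(1)])
  then show ?case using insert x by simp
qed

lemma corner_vals:
  "corner_slot (a, b, c) 1 = slot_of_mom (b, a)"
  "corner_slot (a, b, c) 2 = slot_of_mom (\<not> b, a)"
  "corner_slot (a, b, c) 3 = slot_of_mom (c, \<not> a)"
  "corner_slot (a, b, c) 4 = slot_of_mom (\<not> c, \<not> a)"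
  by (simp_all add: corner_slot_def mom_def)

lemma corner_surj:
  assumes "i \<in> {1..4::nat}"
  shows "\<exists>j \<in> {1..4}. corner_slot pr j = i"
proof -
  obtain a b c where pr: "pr = (a, b, c)" by (cases pr)
  have i: "i = 1 \<or> i = 2 \<or> i = 3 \<or> i = 4" using assms by auto
  have "{1..4::nat} = {1, 2, 3, 4}" by auto
  hence e: "(\<exists>j \<in> {1..4}. corner_slot pr j = i) \<longleftrightarrow>
      corner_slot pr 1 = i \<or> corner_slot pr 2 = i \<or> corner_slot pr 3 = i \<or> corner_slot pr 4 = i"
    by simp
  have "corner_slot pr 1 = i \<or> corner_slot pr 2 = i \<or> corner_slot pr 3 = i \<or> corner_slot pr 4 = i"
    unfolding pr corner_vals
    using i by (cases a; cases b; cases c) (auto simp: slot_of_mom_def)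
  thus ?thesis using e by blast
qed


lemma finite_all_slots: "finite (all_slots n)"
proof -
  have "all_slots n \<subseteq> {RS 0, RS 1} \<union> (\<lambda>(v, i). VS v i) ` ({1..n} \<times> {1..4})"
    unfolding all_slots_def by auto
  thus ?thesis by (rule finite_subset) auto
qed

theorem lemma2:
  fixes n :: nat and rt :: bool and ch :: "slot \<Rightarrow> nat option" and w :: "slot \<Rightarrow> slot"
    and p :: "nat \<Rightarrow> nat" and pr :: "nat \<Rightarrow> bool \<times> bool \<times> bool"
  assumes "even n"
    and "is_graph n rt ch w p pr"
  shows "real (faces n rt ch w p pr) \<le> 3 * real n / 2 + 1"
proof -
  define G where "G = gamma_edges n rt ch w p pr"
  define A where "A = {v \<in> {1..n}. v < p v}"
  define X where "X = (\<lambda>(v, i). (VS v 1, VS v i)) ` (A \<times> {2, 3, 4::nat})"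
  define R where "R = gen (X \<union> G)"
  have ht: "heap_tree n ch" and bw: "bij_betw w (leaves n rt ch) (antileaves n rt ch)"
    and pinv: "\<forall>v \<in> {1..n}. p v \<in> {1..n} \<and> p v \<noteq> v \<and> p (p v) = v"
    using assms(2) unfolding is_graph_def by auto
  have inG: "e \<in> G \<Longrightarrow> e \<in> R" for e
    unfolding R_def by (cases e) (auto intro: gen_edge)
  have inX: "e \<in> X \<Longrightarrow> e \<in> R" for e
    unfolding R_def by (cases e) (auto intro: gen_edge)
  have tree: "s \<in> down_slots n \<Longrightarrow> ch s = Some v \<Longrightarrow> (s, VS v 1) \<in> R" for s v
    by (rule inG) (unfold G_def gamma_edges_def, blast)
  have corner: "v \<in> {1..n} \<Longrightarrow> v < p v \<Longrightarrow> i \<in> {1..4} \<Longrightarrow>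
      (VS v i, VS (p v) (corner_slot (pr v) i)) \<in> R" for v i
    by (rule inG) (unfold G_def gamma_edges_def, blast)
  have root: "(RS 0, RS 1) \<in> R"
    by (rule inG) (unfold G_def gamma_edges_def, blast)
  have xe: "v \<in> {1..n} \<Longrightarrow> v < p v \<Longrightarrow> i \<in> {2, 3, 4} \<Longrightarrow> (VS v 1, VS v i) \<in> R" for v i
    by (rule inX) (unfold X_def A_def, auto)
  have small: "v \<in> {1..n} \<Longrightarrow> v < p v \<Longrightarrow> i \<in> {1..4} \<Longrightarrow> (VS v i, VS v 1) \<in> R" for v i
  proof -
    assume v: "v \<in> {1..n}" "v < p v" "i \<in> {1..4}"
    show ?thesis
    proof (cases "i = 1")
      case True
      then show ?thesis unfolding R_def by (simp add: gen_refl)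
    next
      case False
      then have "i \<in> {2, 3, 4}" using v by auto
      then have "(VS v 1, VS v i) \<in> R" using xe[OF v(1,2)] by blast
      then show ?thesis unfolding R_def by (rule gen_sym)
    qed
  qed
  have local: "v \<in> {1..n} \<Longrightarrow> i \<in> {1..4} \<Longrightarrow> (VS v i, VS v 1) \<in> R" for v i
  proof -
    assume v: "v \<in> {1..n}" "i \<in> {1..4}"
    show ?thesis
    proof (cases "v < p v")
      case True
      then show ?thesis using small v by blast
    next
      case False
      define u where "u = p v"
      have pv: "p v \<in> {1..n}" "p v \<noteq> v" "p (p v) = v" using pinv v(1) by auto
      have u: "u \<in> {1..n}" "p u = v" "u < p u" using pv False unfolding u_def by auto
      obtain j where j: "j \<in> {1..4}" "corner_slot (pr u) j = i" using corner_surj[OF v(2)] by blast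
      have "\<exists>j\<in>{1..4}. corner_slot (pr u) j = 1" by (rule corner_surj) simp
      then obtain j1 where j1: "j1 \<in> {1..4}" "corner_slot (pr u) j1 = 1" by blast
      have "(VS u j, VS v i) \<in> R" using corner[OF u(1) u(3) j(1)] j u by simp
      moreover have "(VS u j1, VS v 1) \<in> R" using corner[OF u(1) u(3) j1(1)] j1 u by simp
      moreover have "(VS u j, VS u 1) \<in> R" using small[OF u(1) u(3) j(1)] .
      moreover have "(VS u j1, VS u 1) \<in> R" using small[OF u(1) u(3) j1(1)] .
      ultimately show ?thesis unfolding R_def by (meson gen_sym gen_trans)
    qed
  qed
  have par: "v \<in> {1..n} \<longrightarrow> (VS v 1, RS 0) \<in> R" for v
  proof (induction v rule: less_induct)
    case (less v)
    show ?case
    proof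
      assume v: "v \<in> {1..n}"
      have bj: "bij_betw ch {s \<in> down_slots n. ch s \<noteq> None} (Some ` {1..n})"
        using ht by (simp add: heap_tree_def)
      have "Some v \<in> ch ` {s \<in> down_slots n. ch s \<noteq> None}"
        using bij_betw_imp_surj_on[OF bj] v by simp
      then obtain s where s: "s \<in> down_slots n" "ch s = Some v" by auto
      have e: "(s, VS v 1) \<in> R" using tree[OF s] .
      have "s = RS 0 \<or> s = RS 1 \<or> (\<exists>u i. s = VS u i \<and> u \<in> {1..n} \<and> i \<in> {2, 3, 4})"
        using s(1) unfolding down_slots_def by auto
      moreover
      {
        assume "s = RS 0"
        hence ?thesis using e unfolding R_def by (metis gen_sym)
      }
      moreover
      {
        assume "s = RS 1"
        hence ?thesis using e root unfolding R_def by (metis gen_sym gen_trans)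
      }
      moreover
      {
        fix u i assume ui: "s = VS u i" "u \<in> {1..n}" "i \<in> {2, 3, 4}"
        have hp: "\<forall>u i v. ch (VS u i) = Some v \<longrightarrow> u < v" using ht by (simp add: heap_tree_def)
        have "u < v" using hp s(2) ui(1) by blast
        hence "(VS u 1, RS 0) \<in> R" using less ui by blast
        moreover have "(VS u i, VS u 1) \<in> R" using local[OF ui(2)] ui(3) by auto
        ultimately have ?thesis using e ui(1) unfolding R_def by (metis gen_sym gen_trans)
      }
      ultimately show "(VS v 1, RS 0) \<in> R" using v by blast
    qed
  qed
  have conn: "x \<in> all_slots n \<Longrightarrow> (x, RS 0) \<in> R" for x
  proof -
    assume "x \<in> all_slots n"
    then have "x = RS 0 \<or> x = RS 1 \<or> (\<exists>v i. x = VS v i \<and> v \<in> {1..n} \<and> i \<in> {1..4})"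
      unfolding all_slots_def by auto
    moreover have "(RS 0, RS 0) \<in> R" unfolding R_def by (rule gen_refl)
    moreover have "(RS 1, RS 0) \<in> R" using root unfolding R_def by (rule gen_sym)
    moreover have "(VS v i, RS 0) \<in> R" if "v \<in> {1..n}" "i \<in> {1..4}" for v i
      using par[of v] local[of v i] that unfolding R_def by (metis gen_trans)
    ultimately show ?thesis by blast
  qed
  have "all_slots n // R \<subseteq> {R `` {RS 0}}"
  proof
    fix C assume "C \<in> all_slots n // R"
    then obtain x where x: "x \<in> all_slots n" "C = R `` {x}" unfolding quotient_def by auto
    have xr: "(x, RS 0) \<in> R" using conn[OF x(1)] .
    have "R `` {x} = R `` {RS 0}"
    proof (intro set_eqI iffI)
      fix y assume "y \<in> R `` {x}"
      thus "y \<in> R `` {RS 0}" using xr unfolding R_def by (metis Image_singleton_iff gen_sym gen_trans)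
    next
      fix y assume "y \<in> R `` {RS 0}"
      thus "y \<in> R `` {x}" using xr unfolding R_def by (metis Image_singleton_iff gen_trans)
    qed
    thus "C \<in> {R `` {RS 0}}" using x by simp
  qed
  hence c1: "card (all_slots n // R) \<le> 1"
    using card_mono[of "{R `` {RS 0}}" "all_slots n // R"] by simp
  have finA: "finite A" unfolding A_def by auto
  have finX: "finite X" unfolding X_def using finA by auto
  have cX: "card X \<le> 3 * card A"
  proof -
    have "card X \<le> card (A \<times> {2, 3, 4::nat})" unfolding X_def by (rule card_image_le) (use finA in auto)
    also have "\<dots> = 3 * card A" by (simp add: card_cartesian_product)
    finally show ?thesis .
  qed
  have cA: "2 * card A \<le> n"
  proof -
    have inj: "inj_on p A"
    proof (rule inj_onI)
      fix x y assume xy: "x \<in> A" "y \<in> A" "p x = p y"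
      have "p (p x) = x" "p (p y) = y" using xy(1,2) pinv unfolding A_def by auto
      thus "x = y" using xy(3) by metis
    qed
    have disj: "A \<inter> p ` A = {}"
    proof (rule ccontr)
      assume "A \<inter> p ` A \<noteq> {}"
      then obtain y where y: "y \<in> A" "p y \<in> A" by blast
      have "y < p y" using y(1) unfolding A_def by simp
      moreover have "p y < p (p y)" using y(2) unfolding A_def by simp
      moreover have "p (p y) = y" using y(1) pinv unfolding A_def by auto
      ultimately show False by simp
    qed
    have sub: "A \<union> p ` A \<subseteq> {1..n}" unfolding A_def using pinv by auto
    have "card (A \<union> p ` A) = card A + card (p ` A)" using disj finA by (simp add: card_Un_disjoint)
    also have "card (p ` A) = card A" using inj by (simp add: card_image)
    finally have "card (A \<union> p ` A) = 2 * card A" by simp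
    moreover have "card (A \<union> p ` A) \<le> n" using card_mono[OF _ sub] by simp
    ultimately show ?thesis by simp
  qed
  have "faces n rt ch w p pr = card (all_slots n // gen G)"
    unfolding faces_def G_def gen_def by simp
  also have "\<dots> \<le> card (all_slots n // R) + card X"
    unfolding R_def by (rule gen_classes_many[OF finite_all_slots finX])
  finally have "faces n rt ch w p pr \<le> 1 + 3 * card A" using c1 cX by simp
  hence "2 * faces n rt ch w p pr \<le> 2 + 3 * n" using cA by simp
  hence "2 * real (faces n rt ch w p pr) \<le> 2 + 3 * real n" by linarith
  thus ?thesis by simp
qed

end
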